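(* Let $1\le n\le N$, $E\in I$, and let $$\gamma\ge\tfrac14\,n^{-1/\rho}\,3^{-(2n+1)d/\rho}\,\kappa^{1/\rho}\,L_0^{-\frac{2p^{(n)}+(2n+1)d}{\rho}},\qquad \tau_n>\frac{2p^{(n)}+(2n+1)d}{\rho}.$$ There exists $\bar L_0^*=\bar L_0^*(n,d,\kappa,\rho,M,\mathrm r_0,s_0^{(n)},r_n)$ such that if $L_0\ge\bar L_0^*$, then there is $\bar g_0^*=\bar g_0^*(n,d,M,\mathrm r_0,s_0^{(n)},\gamma)$ such that for all $|g|>\bar g_0^*$: if the cube $\Lambda^{(n)}_{L_0}(\mathbf u)$ is $(E,\gamma)$-Good, then it is $(E,\tfrac12)$-NS.
   Context: Setting. Fix $N\ge2$, $d\ge1$, $r>0$, $g\ne0$. Points of $\mathbb Z^{nd}$ are $\mathbf x=(x_1,\dots,x_n)$, $x_j\in\mathbb Z^d$, $\|x_j\|=\max_i|x_j^{(i)}|$, $\|\mathbf x\|=\max_j\|x_j\|$, $\langle\mathbf x\rangle=\max\{1,\|\mathbf x\|\}$. Operator $\mathbf H^{(n)}_\omega=\frac1g(\mathbf T+\mathbf U)+\mathbf V(\cdot,\omega)$ on $\ell^2(\mathbb Z^{nd})$: $\mathbf T(\mathbf x,\mathbf y)=\langle y_j-x_j\rangle^{-r}$ if there is $j$ with $x_i=y_i$ for all $i\ne j$, else $0$; $\mathbf U(\mathbf x)=\sum_{j_1<j_2}U(x_{j_1},x_{j_2})$, $U$ symmetric, $|U|\le M_1$, $U(x,x')=0$ if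 $\|x-x'\|\ge\mathrm r_0$ ($\mathrm r_0\ge1$); $\mathbf V(\mathbf x,\omega)=\sum_jV(x_j,\omega)$, $V(x,\omega)$ i.i.d. with distribution $\mu$, $\operatorname{supp}\mu\subset[-M,M]$, Hölder continuous of order $\rho>0$ with $\mathcal K_\rho(\mu)>0$ (where $1/\mathcal K_\rho(\mu)=\inf_{\kappa>0}\sup_{0<|a-b|\le\kappa}|a-b|^{-\rho}\mu([a,b])$), and $\kappa\in(0,\mathcal K_\rho(\mu))$ fixed. Cubes $\Lambda^{(n)}_L(\mathbf u)=\{\mathbf x:\|\mathbf x-\mathbf u\|\le L\}$; $\mathbf H^{(n)}_\Lambda$ = restriction to $\Lambda$, $\mathbf G^{(n)}_\Lambda(E)=(\mathbf H^{(n)}_\Lambda-E)^{-1}$. Sobolev norm of a matrix $\mathcal M$ on $X\times Y$: $\|\mathcal M\|_s^2=C_0\sum_{\mathbf v\in X-Y}(\sup_{\mathbf x-\mathbf y=\mathbf v}|\mathcal M(\mathbf x,\mathbf y)|)^2\langle\mathbf v\rangle^{2s}$, $C_0=C_0(s_0^{(n)})>0$ fixed. With $\tau_n\ge0$, $nd/2<s_0^{(n)}\le r_n<r-nd/2$: $\Lambda^{(n)}_L(\mathbf u)$ is $(E,\tfrac12)$-NS if $\mathbf G^{(n)}_{\Lambda^{(n)}_L(\mathbf u)}(E)$ exists and $\|\mathbf G^{(n)}_{\Lambda^{(n)}_L(\mathbf u)}(E)\|_s\le L^{\tau_n+s/2}$ for all $s\in[s_0^{(n)},r_n]$. Parameters: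 $I=[-MN-1,MN+1]$, $p^{(n)}=18^{N-n}p_0$, $p_0\ge20Nd$. For $E\in I$, $\gamma>0$, an $n$-particle cube $\Lambda^{(n)}_L(\mathbf u)$ is $(E,\gamma)$-Good if $\min_{\mathbf x\in\Lambda^{(n)}_L(\mathbf u)}|\mathbf V(\mathbf x,\omega)-E|>\gamma$. *)

theory Defs
  imports "HOL-Probability.Probability_Measure"
begin

text \<open>Points of Z^d are int lists of length d; n-particle configurations
  (points of Z^(nd)) are lists of n such lists.\<close>

definition pnorm :: "int list \<Rightarrow> int" where
  "pnorm xs = Max (insert 0 (abs ` set xs))"

definition cnorm :: "int list list \<Rightarrow> int" where
  "cnorm x = Max (insert 0 (pnorm ` set x))"

definition pbr :: "int list \<Rightarrow> real" where
  "pbr v = real_of_int (max 1 (pnorm v))"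

definition cbr :: "int list list \<Rightarrow> real" where
  "cbr v = real_of_int (max 1 (cnorm v))"

definition pdiff :: "int list \<Rightarrow> int list \<Rightarrow> int list" where
  "pdiff a b = map2 (-) a b"

definition cdiff :: "int list list \<Rightarrow> int list list \<Rightarrow> int list list" where
  "cdiff x y = map2 pdiff x y"

definition is_config :: "nat \<Rightarrow> nat \<Rightarrow> int list list \<Rightarrow> bool" where
  "is_config n d x \<longleftrightarrow> length x = n \<and> (\<forall>xj\<in>set x. length xj = d)"

definition cube :: "nat \<Rightarrow> nat \<Rightarrow> real \<Rightarrow> int list list \<Rightarrow> int list list set" where
  "cube n d L u = {x. is_config n d x \<and> real_of_int (cnorm (cdiff x u)) \<le> L}"

definition diff_index :: "int list list \<Rightarrow> int list list \<Rightarrow> nat" where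
  "diff_index x y = (THE j. j < length x \<and> x ! j \<noteq> y ! j)"

definition kinT :: "real \<Rightarrow> int list list \<Rightarrow> int list list \<Rightarrow> real" where
  "kinT r x y =
     (if \<exists>j<length x. \<forall>i<length x. i \<noteq> j \<longrightarrow> x ! i = y ! i then
        (if x = y then 1
         else pbr (pdiff (y ! diff_index x y) (x ! diff_index x y)) powr (- r))
      else 0)"

definition intU :: "(int list \<Rightarrow> int list \<Rightarrow> real) \<Rightarrow> int list list \<Rightarrow> real" where
  "intU U x = (\<Sum>j2<length x. \<Sum>j1<j2. U (x ! j1) (x ! j2))"

definition potV :: "(int list \<Rightarrow> real) \<Rightarrow> int list list \<Rightarrow> real" where
  "potV V x = (\<Sum>j<length x. V (x ! j))"

definition Hop :: "real \<Rightarrow> real \<Rightarrow> (int list \<Rightarrow> int list \<Rightarrow> real) \<Rightarrow> (int list \<Rightarrow> real)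
    \<Rightarrow> int list list \<Rightarrow> int list list \<Rightarrow> real" where
  "Hop g r U V x y = (1 / g) * (kinT r x y + (if x = y then intU U x else 0))
                      + (if x = y then potV V x else 0)"

definition is_inverse_on :: "'a set \<Rightarrow> ('a \<Rightarrow> 'a \<Rightarrow> real) \<Rightarrow> ('a \<Rightarrow> 'a \<Rightarrow> real) \<Rightarrow> bool" where
  "is_inverse_on X A G \<longleftrightarrow>
     (\<forall>x\<in>X. \<forall>y\<in>X. (\<Sum>z\<in>X. A x z * G z y) = (if x = y then 1 else 0)) \<and>
     (\<forall>x\<in>X. \<forall>y\<in>X. (\<Sum>z\<in>X. G x z * A z y) = (if x = y then 1 else 0))"

definition diffset :: "int list list set \<Rightarrow> int list list set \<Rightarrow> int list list set" where
  "diffset X Y = {cdiff x y | x y. x \<in> X \<and> y \<in> Y}"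

definition sob_norm :: "real \<Rightarrow> int list list set \<Rightarrow> int list list set
    \<Rightarrow> (int list list \<Rightarrow> int list list \<Rightarrow> real) \<Rightarrow> real \<Rightarrow> real" where
  "sob_norm C0 X Y A s = sqrt (C0 * (\<Sum>v\<in>diffset X Y.
      (Max {\<bar>A x y\<bar> | x y. x \<in> X \<and> y \<in> Y \<and> cdiff x y = v})\<^sup>2 * cbr v powr (2 * s)))"

definition NS :: "nat \<Rightarrow> nat \<Rightarrow> real \<Rightarrow> real \<Rightarrow> real \<Rightarrow> real \<Rightarrow> real \<Rightarrow> real
    \<Rightarrow> (int list \<Rightarrow> int list \<Rightarrow> real) \<Rightarrow> (int list \<Rightarrow> real) \<Rightarrow> real \<Rightarrow> real \<Rightarrow> int list list \<Rightarrow> bool" where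
  "NS n d C0 \<tau> s0 rn g r U V E L u \<longleftrightarrow>
     (\<exists>G. is_inverse_on (cube n d L u) (\<lambda>x y. Hop g r U V x y - (if x = y then E else 0)) G \<and>
          (\<forall>s\<in>{s0..rn}. sob_norm C0 (cube n d L u) (cube n d L u) G s \<le> L powr (\<tau> + s / 2)))"

definition Good :: "nat \<Rightarrow> nat \<Rightarrow> (int list \<Rightarrow> real) \<Rightarrow> real \<Rightarrow> real \<Rightarrow> real \<Rightarrow> int list list \<Rightarrow> bool" where
  "Good n d V E \<gamma> L u \<longleftrightarrow> (\<forall>x\<in>cube n d L u. \<bar>potV V x - E\<bar> > \<gamma>)"

definition holder_const :: "real measure \<Rightarrow> real \<Rightarrow> ereal" where
  "holder_const \<mu> \<rho> = inverse (INF k\<in>{0<..}. SUP ab\<in>{(a, b). a < b \<and> b - a \<le> k}.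
      ereal ((snd ab - fst ab) powr (- \<rho>) * measure \<mu> {fst ab..snd ab}))"

end

theory Submission
  imports Defs "Jordan_Normal_Form.Determinant"
begin


lemma pnorm_le: "pnorm xs \<le> c \<longleftrightarrow> 0 \<le> c \<and> (\<forall>i<length xs. \<bar>xs!i\<bar> \<le> c)"
  unfolding pnorm_def by (auto simp: in_set_conv_nth) (metis nth_mem)

lemma cnorm_le: "cnorm w \<le> c \<longleftrightarrow> 0 \<le> c \<and> (\<forall>j<length w. pnorm (w!j) \<le> c)"
  unfolding cnorm_def by (auto simp: in_set_conv_nth) (metis nth_mem)

lemma cnorm_le2: "cnorm w \<le> c \<longleftrightarrow> 0 \<le> c \<and> (\<forall>j<length w. \<forall>i<length (w!j). \<bar>w!j!i\<bar> \<le> c)"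
  by (auto simp: cnorm_le pnorm_le)

lemma cnorm_nonneg: "0 \<le> cnorm w"
  using cnorm_le by (metis order_refl)

lemma cnorm_entry: "j < length w \<Longrightarrow> i < length (w!j) \<Longrightarrow> \<bar>w!j!i\<bar> \<le> cnorm w"
  using cnorm_le2[of w "cnorm w"] by auto

lemma conf_eqI: "is_config n d x \<Longrightarrow> is_config n d y \<Longrightarrow> (\<And>j i. j < n \<Longrightarrow> i < d \<Longrightarrow> x!j!i = y!j!i) \<Longrightarrow> x = y"
  unfolding is_config_def
  by (intro nth_equalityI) (auto intro!: nth_equalityI)

lemma conf_cdiff: "is_config n d x \<Longrightarrow> is_config n d y \<Longrightarrow> is_config n d (cdiff x y)"
  unfolding is_config_def cdiff_def pdiff_def by (auto simp: in_set_conv_nth) (metis nth_mem min.idem)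

lemma cdiff_entry: "is_config n d x \<Longrightarrow> is_config n d y \<Longrightarrow> j < n \<Longrightarrow> i < d \<Longrightarrow> cdiff x y ! j ! i = x!j!i - y!j!i"
  unfolding is_config_def cdiff_def pdiff_def by auto

lemma conf_len: "is_config n d x \<Longrightarrow> j < n \<Longrightarrow> length x = n \<and> length (x!j) = d"
  unfolding is_config_def by auto

definition Zc :: "nat \<Rightarrow> nat \<Rightarrow> int list list" where "Zc n d = replicate n (replicate d 0)"

lemma conf_Zc: "is_config n d (Zc n d)" unfolding is_config_def Zc_def by auto

lemma cdiff_self: "is_config n d x \<Longrightarrow> cdiff x x = Zc n d"
  by (rule conf_eqI[OF conf_cdiff conf_Zc]) (auto simp: cdiff_entry Zc_def)

lemma cdiff_Zc: "is_config n d x \<Longrightarrow> is_config n d y \<Longrightarrow> cdiff x y = Zc n d \<Longrightarrow> x = y"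
proof (rule conf_eqI, assumption+)
  fix j i assume ji: "j < n" "i < d" and c: "is_config n d x" "is_config n d y" "cdiff x y = Zc n d"
  have "x!j!i - y!j!i = cdiff x y ! j ! i" using cdiff_entry[OF c(1,2) ji] by simp
  also have "\<dots> = 0" using c(3) ji unfolding Zc_def by simp
  finally show "x!j!i = y!j!i" by simp
qed

lemma cdiff_inj: "is_config n d x \<Longrightarrow> is_config n d y \<Longrightarrow> is_config n d u \<Longrightarrow> cdiff x u = cdiff y u \<Longrightarrow> x = y"
proof (rule conf_eqI, assumption+)
  fix j i assume ji: "j < n" "i < d" and c: "is_config n d x" "is_config n d y" "is_config n d u" "cdiff x u = cdiff y u"
  have "x!j!i - u!j!i = y!j!i - u!j!i" using cdiff_entry[OF c(1,3) ji] cdiff_entry[OF c(2,3) ji] c(4) by simp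
  thus "x!j!i = y!j!i" by simp
qed

lemma cbr_Zc: "cbr (Zc n d) = 1"
proof -
  have "cnorm (Zc n d) \<le> 0" unfolding cnorm_le2 Zc_def by auto
  thus ?thesis unfolding cbr_def using cnorm_nonneg[of "Zc n d"] by simp
qed

lemma cbr_ge1: "cbr v \<ge> 1" unfolding cbr_def by simp

lemma cnorm_tri: assumes "is_config n d x" "is_config n d y" "is_config n d u"
  shows "cnorm (cdiff x y) \<le> cnorm (cdiff x u) + cnorm (cdiff y u)"
  unfolding cnorm_le2
proof (intro conjI allI impI)
  show "0 \<le> cnorm (cdiff x u) + cnorm (cdiff y u)" using cnorm_nonneg by (simp add: add_nonneg_nonneg)
  fix j i assume ji: "j < length (cdiff x y)" "i < length (cdiff x y ! j)"
  have c: "is_config n d (cdiff x y)" "is_config n d (cdiff x u)" "is_config n d (cdiff y u)"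
    using assms conf_cdiff by auto
  have jn: "j < n" and id: "i < d" using ji c(1) conf_len unfolding is_config_def by auto
  have "cdiff x y ! j ! i = cdiff x u ! j ! i - cdiff y u ! j ! i"
    using assms jn id by (simp add: cdiff_entry)
  moreover have "\<bar>cdiff x u ! j ! i\<bar> \<le> cnorm (cdiff x u)" "\<bar>cdiff y u ! j ! i\<bar> \<le> cnorm (cdiff y u)"
    using c jn id conf_len by (auto intro!: cnorm_entry)
  ultimately show "\<bar>cdiff x y ! j ! i\<bar> \<le> cnorm (cdiff x u) + cnorm (cdiff y u)" by linarith
qed

definition Sset :: "nat \<Rightarrow> nat \<Rightarrow> real \<Rightarrow> int list list set" where
  "Sset n d c = {w. is_config n d w \<and> real_of_int (cnorm w) \<le> c}"

lemma finite_Sset: "finite (Sset n d c)"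
proof -
  define K where "K = \<lceil>c\<rceil>"
  define T where "T = {a :: int list. set a \<subseteq> {-K..K} \<and> length a = d}"
  have fT: "finite T" unfolding T_def by (rule finite_lists_length_eq) simp
  have "Sset n d c \<subseteq> {w. set w \<subseteq> T \<and> length w = n}"
  proof
    fix w assume "w \<in> Sset n d c"
    hence w: "is_config n d w" "real_of_int (cnorm w) \<le> c" unfolding Sset_def by auto
    have "cnorm w \<le> K" using w(2) unfolding K_def by linarith
    hence "\<forall>j<length w. \<forall>i<length (w!j). \<bar>w!j!i\<bar> \<le> K" using cnorm_le2 by blast
    hence b: "\<forall>r\<in>set w. \<forall>a\<in>set r. \<bar>a\<bar> \<le> K" by (auto simp: in_set_conv_nth)
    have "set w \<subseteq> T"
    proof
      fix r assume r: "r \<in> set w"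
      have "length r = d" using w(1) r unfolding is_config_def by auto
      moreover have "set r \<subseteq> {-K..K}"
      proof
        fix a assume "a \<in> set r"
        hence "\<bar>a\<bar> \<le> K" using b r by blast
        thus "a \<in> {-K..K}" unfolding atLeastAtMost_iff by arith
      qed
      ultimately show "r \<in> T" unfolding T_def by simp
    qed
    thus "w \<in> {w. set w \<subseteq> T \<and> length w = n}" using w(1) unfolding is_config_def by simp
  qed
  thus ?thesis using finite_lists_length_eq[OF fT] finite_subset by blast
qed




lemma inv_bound:
  fixes X :: "'a set" and Dd :: "'a \<Rightarrow> real" and P G :: "'a \<Rightarrow> 'a \<Rightarrow> real"
  assumes fin: "finite X" and gp: "\<gamma> > 0" and Dg: "\<forall>x\<in>X. \<bar>Dd x\<bar> \<ge> \<gamma>"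
    and Ps: "\<forall>x\<in>X. (\<Sum>z\<in>X. \<bar>P x z\<bar>) \<le> \<eta>" and eta: "\<eta> \<le> \<gamma>/2"
    and inv: "\<forall>x\<in>X. \<forall>y\<in>X. (\<Sum>z\<in>X. ((if x = z then Dd x else 0) + P x z) * G z y) = (if x = y then 1 else 0)"
  shows "\<forall>x\<in>X. \<forall>y\<in>X. \<bar>G x y - (if x = y then 1 / Dd x else 0)\<bar> \<le> 2 * \<eta> / \<gamma>^2"
proof (intro ballI)
  fix x0 y assume x0: "x0 \<in> X" and y: "y \<in> X"
  define m where "m = Max ((\<lambda>z. \<bar>G z y\<bar>) ` X)"
  have mz: "z \<in> X \<Longrightarrow> \<bar>G z y\<bar> \<le> m" for z unfolding m_def using fin by (intro Max_ge) auto
  obtain x1 where x1: "x1 \<in> X" "\<bar>G x1 y\<bar> = m"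
    using Max_in[of "(\<lambda>z. \<bar>G z y\<bar>) ` X"] fin y unfolding m_def by fastforce
  have m0: "m \<ge> 0" using x1 by auto
  have etan: "\<eta> \<ge> 0" using Ps x0 by (meson order_trans sum_nonneg abs_ge_zero)
  have key: "\<bar>G x y - (if x = y then 1 / Dd x else 0)\<bar> \<le> \<eta> * m / \<gamma>" if x: "x \<in> X" for x
  proof -
    have Dnz: "Dd x \<noteq> 0" using Dg x gp by force
    have "(\<Sum>z\<in>X. ((if x = z then Dd x else 0) + P x z) * G z y)
        = (\<Sum>z\<in>X. (if x = z then Dd x * G z y else 0)) + (\<Sum>z\<in>X. P x z * G z y)"
      by (simp add: distrib_right sum.distrib) (rule sum.cong, auto)
    also have "(\<Sum>z\<in>X. (if x = z then Dd x * G z y else 0)) = Dd x * G x y"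
      using x fin by simp
    finally have e: "Dd x * G x y + (\<Sum>z\<in>X. P x z * G z y) = (if x = y then 1 else 0)"
      using inv x y by simp
    have "Dd x * (G x y - (if x = y then 1 / Dd x else 0)) = - (\<Sum>z\<in>X. P x z * G z y)"
      using e Dnz by (auto simp: algebra_simps)
    hence "\<bar>Dd x\<bar> * \<bar>G x y - (if x = y then 1 / Dd x else 0)\<bar> = \<bar>\<Sum>z\<in>X. P x z * G z y\<bar>"
      by (metis abs_minus_cancel abs_mult)
    also have "\<dots> \<le> (\<Sum>z\<in>X. \<bar>P x z\<bar> * m)"
      by (rule order_trans[OF sum_abs], rule sum_mono) (auto simp: abs_mult intro!: mult_left_mono mz)
    also have "\<dots> = (\<Sum>z\<in>X. \<bar>P x z\<bar>) * m" by (simp add: sum_distrib_right)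
    also have "\<dots> \<le> \<eta> * m" using Ps x m0 by (auto intro!: mult_right_mono)
    finally have "\<bar>Dd x\<bar> * \<bar>G x y - (if x = y then 1 / Dd x else 0)\<bar> \<le> \<eta> * m" .
    moreover have "\<gamma> * \<bar>G x y - (if x = y then 1 / Dd x else 0)\<bar> \<le> \<bar>Dd x\<bar> * \<bar>G x y - (if x = y then 1 / Dd x else 0)\<bar>"
      using Dg x by (intro mult_right_mono) auto
    ultimately show ?thesis using gp by (simp add: pos_le_divide_eq mult.commute)
  qed
  have inv1: "\<bar>(if x1 = y then 1 / Dd x1 else 0)\<bar> \<le> 1 / \<gamma>"
    using Dg x1 gp by (auto simp: divide_simps)
  have "m \<le> 1 / \<gamma> + \<eta> * m / \<gamma>" using key[OF x1(1)] inv1 x1(2) by linarith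
  moreover have "\<eta> * m / \<gamma> \<le> m / 2"
  proof -
    have "(\<eta> * 2) * m \<le> \<gamma> * m" using eta m0 by (intro mult_right_mono) auto
    thus ?thesis using gp by (simp add: divide_simps mult.commute mult.left_commute)
  qed
  ultimately have m2: "m \<le> 2 / \<gamma>" by linarith
  have "\<eta> * m / \<gamma> \<le> \<eta> * (2 / \<gamma>) / \<gamma>" using m2 etan gp
    by (intro divide_right_mono mult_left_mono) auto
  also have "\<dots> = 2 * \<eta> / \<gamma>^2" by (simp add: power2_eq_square)
  finally show "\<bar>G x0 y - (if x0 = y then 1 / Dd x0 else 0)\<bar> \<le> 2 * \<eta> / \<gamma>^2" using key[OF x0] by linarith
qed

lemma sob_bound:
  assumes finS: "finite S" and DS: "diffset X X \<subseteq> S" and finX: "finite X"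
    and conf: "\<forall>x\<in>X. is_config n d x"
    and bd: "\<forall>x\<in>X. \<forall>y\<in>X. \<bar>G x y\<bar> \<le> b0"
    and off: "\<forall>x\<in>X. \<forall>y\<in>X. x \<noteq> y \<longrightarrow> \<bar>G x y\<bar> \<le> \<beta>"
    and b: "\<beta> \<ge> 0" "b0 \<ge> 0" and s: "s \<le> rn" and C0: "C0 \<ge> 0"
  shows "sob_norm C0 X X G s \<le> sqrt (C0 * (b0^2 + \<beta>^2 * (\<Sum>v\<in>S. cbr v powr (2*rn))))"
proof -
  define Q where "Q v = {\<bar>G x y\<bar> | x y. x \<in> X \<and> y \<in> X \<and> cdiff x y = v}" for v
  have finD: "finite (diffset X X)" using finS DS finite_subset by blast
  have tm: "(Max (Q v))\<^sup>2 * cbr v powr (2 * s) \<le> (if v = Zc n d then b0^2 else 0) + \<beta>^2 * cbr v powr (2*rn)"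
    if v: "v \<in> diffset X X" for v
  proof -
    have fQ: "finite (Q v)"
      by (rule finite_subset[of _ "(\<lambda>(x,y). \<bar>G x y\<bar>) ` (X \<times> X)"]) (auto simp: Q_def finX)
    obtain x y where xy: "x \<in> X" "y \<in> X" "cdiff x y = v" using v unfolding diffset_def by auto
    have neQ: "Q v \<noteq> {}" using xy unfolding Q_def by blast
    have "\<bar>G x y\<bar> \<in> Q v" using xy unfolding Q_def by blast
    hence M0: "0 \<le> Max (Q v)" using fQ by (meson Max_ge abs_ge_zero dual_order.trans)
    have "0 \<le> \<beta>^2 * cbr v powr (2*rn)" by simp
    show ?thesis
    proof (cases "v = Zc n d")
      case True
      have "Max (Q v) \<le> b0" using fQ neQ bd unfolding Q_def by (subst Max_le_iff) auto
      hence "(Max (Q v))\<^sup>2 \<le> b0^2" using M0 by (simp add: power_mono)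
      moreover have "0 \<le> \<beta>^2" by simp
      ultimately show ?thesis using True cbr_Zc[of n d] by simp (intro add_increasing2, auto)
    next
      case False
      have "\<forall>q\<in>Q v. q \<le> \<beta>"
      proof
        fix q assume "q \<in> Q v"
        then obtain x' y' where q: "q = \<bar>G x' y'\<bar>" "x' \<in> X" "y' \<in> X" "cdiff x' y' = v"
          unfolding Q_def by blast
        have "x' \<noteq> y'" using q False conf cdiff_self by metis
        thus "q \<le> \<beta>" using off q by blast
      qed
      hence "Max (Q v) \<le> \<beta>" using fQ neQ by simp
      hence "(Max (Q v))\<^sup>2 \<le> \<beta>^2" using M0 by (simp add: power_mono)
      moreover have "cbr v powr (2 * s) \<le> cbr v powr (2 * rn)"
        using cbr_ge1[of v] s by (intro powr_mono) auto
      ultimately have "(Max (Q v))\<^sup>2 * cbr v powr (2 * s) \<le> \<beta>^2 * cbr v powr (2 * rn)"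
        by (intro mult_mono) auto
      thus ?thesis using False by simp
    qed
  qed
  have "(\<Sum>v\<in>diffset X X. (Max (Q v))\<^sup>2 * cbr v powr (2 * s))
      \<le> (\<Sum>v\<in>diffset X X. (if v = Zc n d then b0^2 else 0) + \<beta>^2 * cbr v powr (2*rn))"
    by (rule sum_mono) (rule tm)
  also have "\<dots> = (\<Sum>v\<in>diffset X X. (if v = Zc n d then b0^2 else 0)) + \<beta>^2 * (\<Sum>v\<in>diffset X X. cbr v powr (2*rn))"
    by (simp add: sum.distrib sum_distrib_left)
  also have "(\<Sum>v\<in>diffset X X. (if v = Zc n d then b0^2 else 0)) \<le> b0^2"
    using finD by (simp add: sum.delta')
  also have "(\<Sum>v\<in>diffset X X. cbr v powr (2*rn)) \<le> (\<Sum>v\<in>S. cbr v powr (2*rn))"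
    by (rule sum_mono2[OF finS DS]) simp
  finally have "(\<Sum>v\<in>diffset X X. (Max (Q v))\<^sup>2 * cbr v powr (2 * s)) \<le> b0^2 + \<beta>^2 * (\<Sum>v\<in>S. cbr v powr (2*rn))"
    by (simp add: mult_left_mono)
  hence "C0 * (\<Sum>v\<in>diffset X X. (Max (Q v))\<^sup>2 * cbr v powr (2 * s)) \<le> C0 * (b0^2 + \<beta>^2 * (\<Sum>v\<in>S. cbr v powr (2*rn)))"
    using C0 by (intro mult_left_mono)
  thus ?thesis unfolding sob_norm_def Q_def by (rule real_sqrt_le_mono)
qed

lemma kinT_bound: "r > 0 \<Longrightarrow> \<bar>kinT r x y\<bar> \<le> 1"
proof -
  assume r: "r > 0"
  have "\<bar>pbr v powr (- r)\<bar> \<le> 1" for v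
  proof -
    have b: "pbr v \<ge> 1" unfolding pbr_def by simp
    have "1 \<le> pbr v powr r" using b r by (intro ge_one_powr_ge_zero) auto
    thus ?thesis using b by (simp add: powr_minus divide_simps)
  qed
  thus ?thesis unfolding kinT_def by auto
qed

lemma intU_bound:
  assumes "is_config n d x" "\<forall>a b. length a = d \<longrightarrow> length b = d \<longrightarrow> \<bar>U a b\<bar> \<le> M1"
  shows "\<bar>intU U x\<bar> \<le> real n * real n * \<bar>M1\<bar>"
proof -
  have L: "length x = n" using assms unfolding is_config_def by auto
  have t: "\<bar>U (x ! j1) (x ! j2)\<bar> \<le> \<bar>M1\<bar>" if "j1 < j2" "j2 < n" for j1 j2
    using assms that unfolding is_config_def by (metis abs_ge_self dual_order.trans nth_mem order.strict_trans)
  have "\<bar>intU U x\<bar> \<le> (\<Sum>j2<n. \<Sum>j1<j2. \<bar>U (x ! j1) (x ! j2)\<bar>)"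
    unfolding intU_def L by (rule order_trans[OF sum_abs], rule sum_mono, rule sum_abs)
  also have "\<dots> \<le> (\<Sum>j2<n. \<Sum>j1<n. \<bar>M1\<bar>)"
    by (rule sum_mono, rule order_trans[OF sum_mono sum_mono2]) (auto intro: t)
  also have "\<dots> = real n * real n * \<bar>M1\<bar>" by simp
  finally show ?thesis .
qed



lemma inv_exists:
  fixes X :: "'a set" and Dd :: "'a \<Rightarrow> real" and P :: "'a \<Rightarrow> 'a \<Rightarrow> real"
  assumes fin: "finite X" and gp: "\<gamma> > 0" and Dg: "\<forall>x\<in>X. \<bar>Dd x\<bar> \<ge> \<gamma>"
    and Ps: "\<forall>x\<in>X. (\<Sum>z\<in>X. \<bar>P x z\<bar>) \<le> \<eta>" and eta: "\<eta> \<le> \<gamma>/2"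
  shows "\<exists>G. is_inverse_on X (\<lambda>x y. (if x = y then Dd x else 0) + P x y) G"
proof -
  define A where "A = (\<lambda>x y. (if x = y then Dd x else 0) + P x y)"
  define k where "k = card X"
  obtain h where h: "bij_betw h {0..<k} X" using ex_bij_betw_nat_finite[OF fin] k_def by blast
  define M where "M = mat k k (\<lambda>(i,j). A (h i) (h j))"
  have Mc: "M \<in> carrier_mat k k" unfolding M_def by simp
  have hX: "i < k \<Longrightarrow> h i \<in> X" for i using h by (auto simp: bij_betw_def)
  have reidx: "(\<Sum>z\<in>X. f z) = (\<Sum>l\<in>{0..<k}. f (h l))" for f :: "'a \<Rightarrow> real"
    using sum.reindex_bij_betw[OF h, of f] by simp
  have detnz: "det M \<noteq> 0"
  proof
    assume "det M = 0"
    then obtain v where v: "v \<in> carrier_vec k" "v \<noteq> 0\<^sub>v k" "M *\<^sub>v v = 0\<^sub>v k"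
      using det_0_iff_vec_prod_zero_field[OF Mc] by blast
    have kpos: "k > 0"
    proof (rule ccontr)
      assume "\<not> k > 0"
      hence "k = 0" by simp
      hence "v = 0\<^sub>v k" using v(1) by (intro eq_vecI) auto
      thus False using v(2) by simp
    qed
    define m where "m = Max ((\<lambda>j. \<bar>v $ j\<bar>) ` {0..<k})"
    obtain i0 where i0: "i0 < k" "\<bar>v $ i0\<bar> = m"
      using Max_in[of "(\<lambda>j. \<bar>v $ j\<bar>) ` {0..<k}"] kpos unfolding m_def by fastforce
    have mj: "j < k \<Longrightarrow> \<bar>v $ j\<bar> \<le> m" for j unfolding m_def by (rule Max_ge) auto
    have "(M *\<^sub>v v) $ i0 = 0" using v i0 by simp
    hence "(\<Sum>j\<in>{0..<k}. A (h i0) (h j) * v $ j) = 0"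
      using v i0 Mc by (simp add: M_def scalar_prod_def)
    hence e0: "Dd (h i0) * v $ i0 + (\<Sum>j\<in>{0..<k}. P (h i0) (h j) * v $ j) = 0"
    proof -
      have "(\<Sum>j\<in>{0..<k}. A (h i0) (h j) * v $ j) = (\<Sum>j\<in>{0..<k}. (if h i0 = h j then Dd (h i0) * v $ j else 0)) + (\<Sum>j\<in>{0..<k}. P (h i0) (h j) * v $ j)"
        by (simp add: A_def distrib_right sum.distrib) (rule sum.cong, auto)
      also have "(\<Sum>j\<in>{0..<k}. (if h i0 = h j then Dd (h i0) * v $ j else 0)) = (\<Sum>j\<in>{0..<k}. (if i0 = j then Dd (h i0) * v $ j else 0))"
        apply (rule sum.cong, simp)
        using h i0 unfolding bij_betw_def inj_on_def by auto
      also have "\<dots> = Dd (h i0) * v $ i0" using i0 by simp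
      finally show ?thesis using \<open>(\<Sum>j\<in>{0..<k}. A (h i0) (h j) * v $ j) = 0\<close> by simp
    qed
    have "\<bar>\<Sum>j\<in>{0..<k}. P (h i0) (h j) * v $ j\<bar> \<le> (\<Sum>j\<in>{0..<k}. \<bar>P (h i0) (h j)\<bar> * m)"
      by (rule order_trans[OF sum_abs], rule sum_mono) (auto simp: abs_mult intro!: mult_left_mono mj)
    also have "\<dots> = (\<Sum>z\<in>X. \<bar>P (h i0) z\<bar>) * m" by (simp add: reidx sum_distrib_right)
    also have "\<dots> \<le> \<eta> * m" using Ps hX[OF i0(1)] i0 by (auto intro!: mult_right_mono)
    finally have sb: "\<bar>\<Sum>j\<in>{0..<k}. P (h i0) (h j) * v $ j\<bar> \<le> \<eta> * m" .
    have "Dd (h i0) * v $ i0 = - (\<Sum>j\<in>{0..<k}. P (h i0) (h j) * v $ j)" using e0 by linarith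
    hence "\<bar>Dd (h i0)\<bar> * \<bar>v $ i0\<bar> = \<bar>\<Sum>j\<in>{0..<k}. P (h i0) (h j) * v $ j\<bar>"
      by (metis abs_minus_cancel abs_mult)
    hence "\<bar>Dd (h i0)\<bar> * m \<le> \<eta> * m" using sb i0(2) by simp
    moreover have "\<gamma> * m \<le> \<bar>Dd (h i0)\<bar> * m" using Dg hX[OF i0(1)] i0 by (auto intro!: mult_right_mono)
    moreover have "\<eta> * m \<le> \<gamma> / 2 * m" using eta i0 by (intro mult_right_mono) auto
    ultimately have "\<gamma> * m \<le> 0" by linarith
    hence "m \<le> 0" using gp by (simp add: mult_le_0_iff)
    hence "m = 0" using i0(2) by simp
    hence "v = 0\<^sub>v k" using mj v by (intro eq_vecI) auto
    thus False using v by simp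
  qed
  define B where "B = adj_mat M"
  have B1: "M * B = det M \<cdot>\<^sub>m 1\<^sub>m k" "B * M = det M \<cdot>\<^sub>m 1\<^sub>m k" "B \<in> carrier_mat k k"
    using adj_mat[OF Mc] B_def by auto
  define hi where "hi = inv_into {0..<k} h"
  have hih: "i < k \<Longrightarrow> hi (h i) = i" for i using h unfolding hi_def by (simp add: bij_betw_inv_into_left)
  have hhi: "x \<in> X \<Longrightarrow> h (hi x) = x" "x \<in> X \<Longrightarrow> hi x < k" for x
    using h unfolding hi_def by (auto simp: bij_betw_inv_into_right bij_betw_def)
  define G where "G = (\<lambda>x y. B $$ (hi x, hi y) / det M)"
  have MB: "(\<Sum>l\<in>{0..<k}. M $$ (i, l) * B $$ (l, j)) = (if i = j then det M else 0)"
    if "i < k" "j < k" for i j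
  proof -
    have "(\<Sum>l\<in>{0..<k}. M $$ (i, l) * B $$ (l, j)) = (M * B) $$ (i, j)"
      using Mc B1(3) that by (simp add: scalar_prod_def)
    also have "\<dots> = (if i = j then det M else 0)" unfolding B1(1) using that by simp
    finally show ?thesis .
  qed
  have BM: "(\<Sum>l\<in>{0..<k}. B $$ (i, l) * M $$ (l, j)) = (if i = j then det M else 0)"
    if "i < k" "j < k" for i j
  proof -
    have "(\<Sum>l\<in>{0..<k}. B $$ (i, l) * M $$ (l, j)) = (B * M) $$ (i, j)"
      using Mc B1(3) that by (simp add: scalar_prod_def)
    also have "\<dots> = (if i = j then det M else 0)" unfolding B1(2) using that by simp
    finally show ?thesis .
  qed
  have hieq: "x \<in> X \<Longrightarrow> y \<in> X \<Longrightarrow> (hi x = hi y) = (x = y)" for x y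
    using hhi(1) by metis
  have "is_inverse_on X A G"
    unfolding is_inverse_on_def
  proof (intro conjI ballI)
    fix x y assume xy: "x \<in> X" "y \<in> X"
    have "(\<Sum>z\<in>X. A x z * G z y) = (\<Sum>l\<in>{0..<k}. M $$ (hi x, l) * B $$ (l, hi y)) / det M"
      by (simp add: reidx G_def hih M_def hhi xy sum_divide_distrib)
    also have "\<dots> = (if hi x = hi y then det M else 0) / det M" using MB hhi(2) xy by simp
    also have "\<dots> = (if x = y then 1 else 0)" using hieq[OF xy] detnz by simp
    finally show "(\<Sum>z\<in>X. A x z * G z y) = (if x = y then 1 else 0)" .
    have "(\<Sum>z\<in>X. G x z * A z y) = (\<Sum>l\<in>{0..<k}. B $$ (hi x, l) * M $$ (l, hi y)) / det M"
      by (simp add: reidx G_def hih M_def hhi xy sum_divide_distrib)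
    also have "\<dots> = (if hi x = hi y then det M else 0) / det M" using BM hhi(2) xy by simp
    also have "\<dots> = (if x = y then 1 else 0)" using hieq[OF xy] detnz by simp
    finally show "(\<Sum>z\<in>X. G x z * A z y) = (if x = y then 1 else 0)" .
  qed
  thus ?thesis unfolding A_def by blast
qed



theorem lemma4p2:
  fixes N d n :: nat and r r0 M1 M \<kappa> \<rho> p0 \<tau> s0 rn C0 :: real
    and U :: "int list \<Rightarrow> int list \<Rightarrow> real" and \<mu> :: "real measure"
  assumes "N \<ge> 2" and "d \<ge> 1" and "r > 0" and "r0 \<ge> 1"
    and "\<forall>x y. length x = d \<longrightarrow> length y = d \<longrightarrow> U x y = U y x"
    and "\<forall>x y. length x = d \<longrightarrow> length y = d \<longrightarrow> \<bar>U x y\<bar> \<le> M1"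
    and "\<forall>x y. length x = d \<longrightarrow> length y = d \<longrightarrow> real_of_int (pnorm (pdiff x y)) \<ge> r0 \<longrightarrow> U x y = 0"
    and "prob_space \<mu>" and "sets \<mu> = sets borel" and "measure \<mu> {-M..M} = 1"
    and "\<rho> > 0" and "\<kappa> > 0" and "ereal \<kappa> < holder_const \<mu> \<rho>"
    and "p0 \<ge> 20 * real N * real d"
    and "1 \<le> n" and "n \<le> N"
    and "\<tau> \<ge> 0"
    and "\<tau> > (2 * (18 ^ (N - n) * p0) + (2 * real n + 1) * real d) / \<rho>"
    and "real n * real d / 2 < s0" and "s0 \<le> rn" and "rn < r - real n * real d / 2"
    and "C0 > 0"
  shows "\<exists>L0s. \<forall>L0 \<ge> L0s. \<forall>\<gamma>.
           \<gamma> \<ge> 1/4 * real n powr (-1/\<rho>) * 3 powr (- (2 * real n + 1) * real d / \<rho>)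
                 * \<kappa> powr (1/\<rho>)
                 * L0 powr (- (2 * (18 ^ (N - n) * p0) + (2 * real n + 1) * real d) / \<rho>) \<longrightarrow>
           (\<exists>g0. \<forall>g. g \<noteq> 0 \<longrightarrow> \<bar>g\<bar> > g0 \<longrightarrow>
              (\<forall>E \<in> {- M * real N - 1 .. M * real N + 1}. \<forall>u. is_config n d u \<longrightarrow>
                 (\<forall>V. (\<forall>x. length x = d \<longrightarrow> V x \<in> {-M..M}) \<longrightarrow>
                    Good n d V E \<gamma> L0 u \<longrightarrow> NS n d C0 \<tau> s0 rn g r U V E L0 u)))"
proof -
  note a = assms
  define q :: real where "q = 18 ^ (N - n) * p0"
  define w :: real where "w = (2 * real n + 1) * real d"
  define e where "e = (- (2 * (18 ^ (N - n) * p0) + (2 * real n + 1) * real d) / \<rho>)"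
  define c where "c = 1/4 * real n powr (-1/\<rho>) * 3 powr (- (2 * real n + 1) * real d / \<rho>) * \<kappa> powr (1/\<rho>)"
  have cpos: "c > 0" unfolding c_def using a(15) a(12) by simp
  have wpos: "w > 0" unfolding w_def using a(2) by simp
  have e_eq: "e = - ((2*q + w) / \<rho>)" unfolding e_def q_def w_def by (subst minus_divide_left) (simp add: algebra_simps)
  have "\<tau> > (2*q + w) / \<rho>" using a(18) unfolding q_def w_def by simp
  hence te: "\<tau> + e > 0" using e_eq by simp
  define b where "b = sqrt (5 * C0) / c"
  have bpos: "b > 0" unfolding b_def using cpos a(22) by simp
  define L0s where "L0s = max 1 (b powr (1 / (\<tau> + e)))"
  show ?thesis
  proof (rule exI[of _ L0s], intro allI impI)
    fix L0 \<gamma> :: real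
    assume L0: "L0s \<le> L0"
    assume "\<gamma> \<ge> 1/4 * real n powr (-1/\<rho>) * 3 powr (- (2 * real n + 1) * real d / \<rho>)
                 * \<kappa> powr (1/\<rho>)
                 * L0 powr (- (2 * (18 ^ (N - n) * p0) + (2 * real n + 1) * real d) / \<rho>)"
    hence g1: "\<gamma> \<ge> c * L0 powr e" unfolding c_def e_def by simp
    have L01: "L0 \<ge> 1" using L0 unfolding L0s_def by simp
    have "(b powr (1 / (\<tau> + e))) powr (\<tau> + e) \<le> L0 powr (\<tau> + e)"
      using L0 te unfolding L0s_def by (intro powr_mono2) auto
    hence hL: "b \<le> L0 powr (\<tau> + e)" using te bpos by (simp add: powr_powr)
    have "c * L0 powr e > 0" using cpos L01 by simp
    hence gpos: "\<gamma> > 0" using g1 by linarith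
    have "sqrt (5 * C0) \<le> c * L0 powr (\<tau> + e)" using hL cpos unfolding b_def by (simp add: pos_divide_le_eq mult.commute)
    also have "\<dots> = c * L0 powr e * L0 powr \<tau>" using L01 by (simp add: powr_add)
    also have "\<dots> \<le> \<gamma> * L0 powr \<tau>" using g1 by (intro mult_right_mono) auto
    finally have "(sqrt (5 * C0))^2 \<le> (\<gamma> * L0 powr \<tau>)^2" using a(22) by (intro power_mono) auto
    moreover have "(sqrt (5 * C0))^2 = 5 * C0" using a(22) by simp
    moreover have sqL: "(L0 powr \<tau>)^2 = L0 powr (2 * \<tau>)"
    proof -
      have "L0 powr (2 * \<tau>) = L0 powr \<tau> * L0 powr \<tau>" using powr_add[of L0 \<tau> \<tau>] by (simp only: mult_2)
      thus ?thesis by (simp add: power2_eq_square)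
    qed
    ultimately have key5: "5 * C0 \<le> \<gamma>^2 * L0 powr (2 * \<tau>)"
      by (simp only: power_mult_distrib)
    define S where "S = Sset n d (2 * L0)"
    define W where "W = (\<Sum>v\<in>S. cbr v powr (2*rn))"
    define CS where "CS = real (card S)"
    define KK where "KK = 1 + real n * real n * \<bar>M1\<bar>"
    have finS: "finite S" unfolding S_def by (rule finite_Sset)
    have W0: "W \<ge> 0" unfolding W_def by (simp add: sum_nonneg)
    have KK1: "KK \<ge> 1" unfolding KK_def by simp
    have CS0: "CS \<ge> 0" unfolding CS_def by simp
    show "\<exists>g0. \<forall>g. g \<noteq> 0 \<longrightarrow> \<bar>g\<bar> > g0 \<longrightarrow>
              (\<forall>E \<in> {- M * real N - 1 .. M * real N + 1}. \<forall>u. is_config n d u \<longrightarrow>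
                 (\<forall>V. (\<forall>x. length x = d \<longrightarrow> V x \<in> {-M..M}) \<longrightarrow>
                    Good n d V E \<gamma> L0 u \<longrightarrow> NS n d C0 \<tau> s0 rn g r U V E L0 u))"
    proof (rule exI[of _ "2 * (1 + W) * CS * KK / \<gamma>"], intro allI impI ballI)
      fix g E u V
      assume gnz: "g \<noteq> 0" and gbig: "2 * (1 + W) * CS * KK / \<gamma> < \<bar>g\<bar>"
        and u: "is_config n d u" and Vb: "\<forall>x. length x = d \<longrightarrow> V x \<in> {-M..M}"
        and good: "Good n d V E \<gamma> L0 u"
      define X where "X = cube n d L0 u"
      have Xc: "\<forall>x\<in>X. is_config n d x" unfolding X_def cube_def by auto
      have XL: "x \<in> X \<Longrightarrow> real_of_int (cnorm (cdiff x u)) \<le> L0" for x unfolding X_def cube_def by auto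
      have injX: "inj_on (\<lambda>x. cdiff x u) X"
      proof (rule inj_onI)
        fix x y assume "x \<in> X" "y \<in> X" "cdiff x u = cdiff y u"
        thus "x = y" using cdiff_inj[of n d x y u] Xc u by blast
      qed
      have imX: "(\<lambda>x. cdiff x u) ` X \<subseteq> S"
      proof
        fix v assume "v \<in> (\<lambda>x. cdiff x u) ` X"
        then obtain x where x: "x \<in> X" "v = cdiff x u" by blast
        have "is_config n d v" using conf_cdiff[of n d x u] Xc x u by blast
        moreover have "real_of_int (cnorm v) \<le> 2 * L0" using XL[OF x(1)] L01 unfolding x(2) by linarith
        ultimately show "v \<in> S" unfolding S_def Sset_def by blast
      qed
      have finX: "finite X" using finite_imageD[OF finite_subset[OF imX finS] injX] .
      have cardX: "real (card X) \<le> CS" unfolding CS_def using card_inj_on_le[OF injX imX finS] by simp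
      have DS: "diffset X X \<subseteq> S"
      proof
        fix v assume "v \<in> diffset X X"
        then obtain x y where xy: "x \<in> X" "y \<in> X" "v = cdiff x y" unfolding diffset_def by auto
        have "real_of_int (cnorm (cdiff x y)) \<le> real_of_int (cnorm (cdiff x u)) + real_of_int (cnorm (cdiff y u))"
          using cnorm_tri[of n d x y u] Xc xy u by simp
        also have "\<dots> \<le> 2 * L0" using XL[OF xy(1)] XL[OF xy(2)] by linarith
        finally have "real_of_int (cnorm v) \<le> 2 * L0" using xy(3) by simp
        moreover have "is_config n d v" using conf_cdiff[of n d x y] Xc xy by simp
        ultimately show "v \<in> S" unfolding S_def Sset_def by blast
      qed
      define Dd where "Dd = (\<lambda>x. potV V x - E)"
      define P where "P = (\<lambda>x z. (1/g) * (kinT r x z + (if x = z then intU U x else 0)))"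
      define \<eta> where "\<eta> = CS * KK / \<bar>g\<bar>"
      have gabs: "\<bar>g\<bar> > 0" using gnz by simp
      have Pb: "\<bar>P x z\<bar> \<le> KK / \<bar>g\<bar>" if "x \<in> X" for x z
      proof -
        have "\<bar>kinT r x z + (if x = z then intU U x else 0)\<bar> \<le> 1 + real n * real n * \<bar>M1\<bar>"
        proof -
          have k: "\<bar>kinT r x z\<bar> \<le> 1" by (rule kinT_bound[OF a(3)])
          have i: "\<bar>intU U x\<bar> \<le> real n * real n * \<bar>M1\<bar>"
            using that Xc by (intro intU_bound[OF _ a(6)]) simp
          have "\<bar>(if x = z then intU U x else 0)\<bar> \<le> real n * real n * \<bar>M1\<bar>"
            using i by auto
          thus ?thesis using k abs_triangle_ineq[of "kinT r x z" "(if x = z then intU U x else 0)"] by linarith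
        qed
        hence "\<bar>kinT r x z + (if x = z then intU U x else 0)\<bar> / \<bar>g\<bar> \<le> KK / \<bar>g\<bar>"
          unfolding KK_def using gabs by (intro divide_right_mono) auto
        moreover have "\<bar>P x z\<bar> = \<bar>kinT r x z + (if x = z then intU U x else 0)\<bar> / \<bar>g\<bar>"
          unfolding P_def by (simp add: abs_mult)
        ultimately show ?thesis by simp
      qed
      have Ps: "\<forall>x\<in>X. (\<Sum>z\<in>X. \<bar>P x z\<bar>) \<le> \<eta>"
      proof
        fix x assume x: "x \<in> X"
        have "(\<Sum>z\<in>X. \<bar>P x z\<bar>) \<le> (\<Sum>z\<in>X. KK / \<bar>g\<bar>)" by (rule sum_mono) (rule Pb[OF x])
        also have "\<dots> = real (card X) * (KK / \<bar>g\<bar>)" by simp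
        also have "\<dots> \<le> CS * (KK / \<bar>g\<bar>)" using cardX KK1 gabs by (intro mult_right_mono) auto
        finally show "(\<Sum>z\<in>X. \<bar>P x z\<bar>) \<le> \<eta>" unfolding \<eta>_def by simp
      qed
      have eta_s: "\<eta> * (2 * (1 + W)) \<le> \<gamma>"
      proof -
        have "2 * (1 + W) * CS * KK < \<bar>g\<bar> * \<gamma>" using gbig gpos by (simp add: pos_divide_less_eq)
        moreover have "\<eta> * (2 * (1 + W)) = (2 * (1 + W) * CS * KK) / \<bar>g\<bar>" unfolding \<eta>_def by simp
        ultimately show ?thesis using gabs by (simp add: pos_divide_le_eq mult.commute)
      qed
      have eta0: "\<eta> \<ge> 0" unfolding \<eta>_def using CS0 KK1 by simp
      have "\<eta> * 2 \<le> \<eta> * (2 * (1 + W))" using W0 eta0 by (intro mult_left_mono) auto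
      hence eta2: "\<eta> \<le> \<gamma> / 2" using eta_s by linarith
      have Dg: "\<forall>x\<in>X. \<bar>Dd x\<bar> \<ge> \<gamma>" using good unfolding Good_def Dd_def X_def by (auto intro: less_imp_le)
      have Aeq: "(\<lambda>x y. Hop g r U V x y - (if x = y then E else 0)) = (\<lambda>x y. (if x = y then Dd x else 0) + P x y)"
        unfolding Hop_def Dd_def P_def by (intro ext) (auto simp: algebra_simps)
      obtain G where G: "is_inverse_on X (\<lambda>x y. (if x = y then Dd x else 0) + P x y) G"
        using inv_exists[OF finX gpos Dg Ps eta2] by blast
      define \<beta> where "\<beta> = 2 * \<eta> / \<gamma>^2"
      have Gb: "\<forall>x\<in>X. \<forall>y\<in>X. \<bar>G x y - (if x = y then 1 / Dd x else 0)\<bar> \<le> \<beta>"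
        unfolding \<beta>_def using inv_bound[OF finX gpos Dg Ps eta2] G unfolding is_inverse_on_def by blast
      have b0: "\<beta> \<ge> 0" unfolding \<beta>_def using eta0 by simp
      have bW: "\<beta> * (1 + W) \<le> 1 / \<gamma>"
      proof -
        have "\<beta> * (1 + W) = (\<eta> * (2 * (1 + W))) / \<gamma>^2" unfolding \<beta>_def by simp
        also have "\<dots> \<le> \<gamma> / \<gamma>^2" using eta_s by (intro divide_right_mono) auto
        also have "\<dots> = 1 / \<gamma>" using gpos by (simp add: power2_eq_square)
        finally show ?thesis .
      qed
      have "\<beta> \<le> \<beta> * (1 + W)" using b0 W0 by (simp add: algebra_simps)
      hence bg: "\<beta> \<le> 1 / \<gamma>" using bW by linarith
      have bd: "\<forall>x\<in>X. \<forall>y\<in>X. \<bar>G x y\<bar> \<le> 1/\<gamma> + \<beta>"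
      proof (intro ballI)
        fix x y assume xy: "x \<in> X" "y \<in> X"
        have "\<bar>(if x = y then 1 / Dd x else 0)\<bar> \<le> 1 / \<gamma>" using Dg xy gpos by (auto simp: divide_simps)
        moreover have "\<bar>G x y - (if x = y then 1 / Dd x else 0)\<bar> \<le> \<beta>" using Gb xy by blast
        ultimately show "\<bar>G x y\<bar> \<le> 1/\<gamma> + \<beta>" by linarith
      qed
      have off: "\<forall>x\<in>X. \<forall>y\<in>X. x \<noteq> y \<longrightarrow> \<bar>G x y\<bar> \<le> \<beta>"
      proof (intro ballI impI)
        fix x y assume "x \<in> X" "y \<in> X" "x \<noteq> y"
        thus "\<bar>G x y\<bar> \<le> \<beta>" using Gb by fastforce
      qed
      have tot: "C0 * ((1/\<gamma> + \<beta>)^2 + \<beta>^2 * W) \<le> L0 powr (2 * \<tau>)"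
      proof -
        have "(1/\<gamma> + \<beta>)^2 \<le> (2/\<gamma>)^2" using bg b0 gpos by (intro power_mono) auto
        moreover have "\<beta>^2 * W \<le> (1/\<gamma>)^2"
        proof -
          have e1: "(1+W)^2 = W + (1 + W + W*W)" by (simp add: power2_eq_square algebra_simps)
          have "W*W \<ge> 0" using W0 by simp
          hence "W \<le> (1+W)^2" using e1 W0 by linarith
          hence "\<beta>^2 * W \<le> \<beta>^2 * (1+W)^2" by (intro mult_left_mono) auto
          also have "\<dots> = (\<beta> * (1 + W))^2" by (simp add: power_mult_distrib)
          finally have "\<beta>^2 * W \<le> (\<beta> * (1 + W))^2" .
          also have "\<dots> \<le> (1/\<gamma>)^2" using bW b0 W0 by (intro power_mono) auto
          finally show ?thesis .
        qed
        moreover have "(2/\<gamma>)^2 = 4 / \<gamma>^2" "(1/\<gamma>)^2 = 1 / \<gamma>^2" by (simp_all add: power_divide)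
        ultimately have "(1/\<gamma> + \<beta>)^2 + \<beta>^2 * W \<le> 5 / \<gamma>^2" by simp
        hence "C0 * ((1/\<gamma> + \<beta>)^2 + \<beta>^2 * W) \<le> C0 * (5 / \<gamma>^2)" using a(22) by (intro mult_left_mono) auto
        also have "\<dots> = (5 * C0) / \<gamma>^2" by simp
        also have "\<dots> \<le> L0 powr (2 * \<tau>)" using key5 gpos by (simp add: pos_divide_le_eq mult.commute)
        finally show ?thesis .
      qed
      show "NS n d C0 \<tau> s0 rn g r U V E L0 u"
        unfolding NS_def Aeq X_def[symmetric]
      proof (intro exI[of _ G] conjI ballI)
        show "is_inverse_on X (\<lambda>x y. (if x = y then Dd x else 0) + P x y) G" by (rule G)
        fix s assume s: "s \<in> {s0..rn}"
        have "real n * real d / 2 \<ge> 0" by simp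
        moreover have "s0 \<le> s" using s by simp
        ultimately have s0: "s \<ge> 0" using a(19) by linarith
        have "sob_norm C0 X X G s \<le> sqrt (C0 * ((1/\<gamma> + \<beta>)^2 + \<beta>^2 * W))"
          unfolding W_def using s a(22) gpos b0
          by (intro sob_bound[OF finS DS finX Xc bd off]) auto
        also have "\<dots> \<le> sqrt (L0 powr (2 * \<tau>))" using tot by (rule real_sqrt_le_mono)
        also have "\<dots> = L0 powr \<tau>" unfolding sqL[symmetric] by simp
        also have "\<dots> \<le> L0 powr (\<tau> + s / 2)" using L01 s0 by (intro powr_mono) auto
        finally show "sob_norm C0 X X G s \<le> L0 powr (\<tau> + s / 2)" .
      qed
    qed
  qed
qed

end
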